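(* Under the full cost model, the competitive ratio of the (offline-chosen) better algorithm among MTFE, MTFO and TS is at least $1.6$: for every $c<1.6$ and every constant $b$, there exist a list and a request sequence $\sigma$ with $\min\{\mathrm{TS}(\sigma),\mathrm{MTFO}(\sigma),\mathrm{MTFE}(\sigma)\}>c\cdot\mathrm{OPT}(\sigma)+b$.
   Context: Static list update: a list of $l$ distinct items in some initial order; serving a request to the item at position $i$ (from the front) costs $i$ (full cost model); the accessed item may be moved closer to the front for free; two adjacent items may be swapped at cost $1$. $A(\sigma)$ is the total cost of algorithm $A$ and $\mathrm{OPT}(\sigma)$ the minimum cost of any offline algorithm from the same initial list. MTFO moves a requested item to the front on the 1st, 3rd, 5th, ... request to that item; MTFE on the 2nd, 4th, 6th, ... request; otherwise they leave it in place. TS (Timestamp): on a request to item $x$, if $x$ has been requested before and some item preceding $x$ has been requested at most once since the previous request to $x$, then $x$ is moved to immediately in front of the frontmost such item; otherwise nothing moves. *)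

theory Defs
  imports Complex_Main
begin

text \<open>0-based position of an item in a list; accessing the item at 0-based
position p costs p+1 (full cost model).\<close>
definition pos :: "'a list \<Rightarrow> 'a \<Rightarrow> nat" where
  "pos xs x = length (takeWhile (\<lambda>y. y \<noteq> x) xs)"

definition move_to :: "nat \<Rightarrow> 'a \<Rightarrow> 'a list \<Rightarrow> 'a list" where
  "move_to j x xs = take j (remove1 x xs) @ x # drop j (remove1 x xs)"

definition mtf :: "'a \<Rightarrow> 'a list \<Rightarrow> 'a list" where
  "mtf x xs = move_to 0 x xs"

definition swap_adj :: "nat \<Rightarrow> 'a list \<Rightarrow> 'a list" where
  "swap_adj k ys = ys[k := ys ! Suc k, Suc k := ys ! k]"

inductive swaps :: "'a list \<Rightarrow> 'a list \<Rightarrow> nat \<Rightarrow> bool" where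
  swaps_refl: "swaps xs xs 0"
| swaps_step: "swaps xs ys n \<Longrightarrow> Suc k < length ys \<Longrightarrow> swaps xs (swap_adj k ys) (Suc n)"

text \<open>Before each request, any number of paid adjacent swaps
(cost 1 each); then the access (cost = 1-based position); then the accessed
item may be moved forward to any position for free.\<close>
inductive off_cost :: "'a list \<Rightarrow> 'a list \<Rightarrow> nat \<Rightarrow> bool" where
  off_nil: "off_cost xs [] 0"
| off_cons: "swaps xs ys n \<Longrightarrow> j \<le> pos ys x \<Longrightarrow> off_cost (move_to j x ys) \<sigma> c
     \<Longrightarrow> off_cost xs (x # \<sigma>) (n + (pos ys x + 1) + c)"

definition OPT :: "'a list \<Rightarrow> 'a list \<Rightarrow> nat" where
  "OPT xs \<sigma> = (LEAST c. off_cost xs \<sigma> c)"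

text \<open>Cost of a deterministic online algorithm given by a step function
f hs xs x (hs = previous requests in chronological order, xs = current list,
x = current request; result = list after serving x).\<close>
fun run_cost :: "('a list \<Rightarrow> 'a list \<Rightarrow> 'a \<Rightarrow> 'a list) \<Rightarrow> 'a list \<Rightarrow> 'a list \<Rightarrow> 'a list \<Rightarrow> nat" where
  "run_cost f hs xs [] = 0"
| "run_cost f hs xs (x # \<sigma>) = (pos xs x + 1) + run_cost f (hs @ [x]) (f hs xs x) \<sigma>"

definition mtfo_step :: "'a list \<Rightarrow> 'a list \<Rightarrow> 'a \<Rightarrow> 'a list" where
  "mtfo_step hs xs x = (if odd (count_list hs x + 1) then mtf x xs else xs)"

definition mtfe_step :: "'a list \<Rightarrow> 'a list \<Rightarrow> 'a \<Rightarrow> 'a list" where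
  "mtfe_step hs xs x = (if even (count_list hs x + 1) then mtf x xs else xs)"

definition since_last :: "'a list \<Rightarrow> 'a \<Rightarrow> 'a list" where
  "since_last hs x = rev (takeWhile (\<lambda>y. y \<noteq> x) (rev hs))"

definition ts_step :: "'a list \<Rightarrow> 'a list \<Rightarrow> 'a \<Rightarrow> 'a list" where
  "ts_step hs xs x =
    (let cands = filter (\<lambda>y. count_list (since_last hs x) y \<le> 1) (take (pos xs x) xs)
     in if x \<in> set hs \<and> cands \<noteq> [] then move_to (pos xs (hd cands)) x xs else xs)"

definition MTFO :: "'a list \<Rightarrow> 'a list \<Rightarrow> nat" where
  "MTFO xs \<sigma> = run_cost mtfo_step [] xs \<sigma>"

definition MTFE :: "'a list \<Rightarrow> 'a list \<Rightarrow> nat" where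
  "MTFE xs \<sigma> = run_cost mtfe_step [] xs \<sigma>"

definition TS :: "'a list \<Rightarrow> 'a list \<Rightarrow> nat" where
  "TS xs \<sigma> = run_cost ts_step [] xs \<sigma>"

end

theory Submission imports Defs begin

definition relg :: "('a list \<Rightarrow> 'a \<Rightarrow> 'b) \<Rightarrow> 'a set \<Rightarrow> 'a list \<Rightarrow> 'a list \<Rightarrow> bool" where
  "relg ob S a b = (\<forall>x\<in>S. ob a x = ob b x)"

definition compat :: "('a list \<Rightarrow> 'a \<Rightarrow> 'b) \<Rightarrow> bool" where
  "compat ob = (\<forall>a b y x. ob a x = ob b x \<longrightarrow> ob (a @ [y]) x = ob (b @ [y]) x)"

lemma relg_trans: "relg ob S a b \<Longrightarrow> relg ob S b c \<Longrightarrow> relg ob S a c" by (simp add: relg_def)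

lemma relg_app: "compat ob \<Longrightarrow> relg ob S a b \<Longrightarrow> relg ob S (a @ zs) (b @ zs)"
proof (induction zs arbitrary: a b)
  case Nil then show ?case by simp
next
  case (Cons z zs)
  have "relg ob S (a @ [z]) (b @ [z])" using Cons.prems unfolding relg_def compat_def by blast
  then show ?case using Cons.IH[of "a @ [z]" "b @ [z]"] Cons.prems by simp
qed

definition obP :: "'a list \<Rightarrow> 'a \<Rightarrow> bool" where "obP a x = even (count_list a x)"
definition obT :: "'a list \<Rightarrow> 'a \<Rightarrow> bool \<times> 'a list" where "obT a x = (x \<in> set a, since_last a x)"

lemma since_last_snoc: "since_last (hs @ [y]) x = (if y = x then [] else since_last hs x @ [y])"
  by (simp add: since_last_def)

lemma compat_P: "compat obP" unfolding compat_def obP_def by auto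
lemma compat_T: "compat obT" unfolding compat_def obT_def by (auto simp: since_last_snoc)

definition hdep :: "('a list \<Rightarrow> 'a list \<Rightarrow> 'a \<Rightarrow> 'a list) \<Rightarrow> ('a list \<Rightarrow> 'a \<Rightarrow> 'b) \<Rightarrow> 'a set \<Rightarrow> bool" where
  "hdep f ob S = (\<forall>a b xs x. relg ob S a b \<longrightarrow> x \<in> S \<longrightarrow> f a xs x = f b xs x)"

lemma hdep_ts: "hdep ts_step obT S"
  unfolding hdep_def relg_def obT_def ts_step_def by (auto simp: Let_def)

lemma hdep_mtfo: "hdep mtfo_step obP S"
  unfolding hdep_def relg_def obP_def mtfo_step_def by auto

lemma hdep_mtfe: "hdep mtfe_step obP S"
  unfolding hdep_def relg_def obP_def mtfe_step_def by auto

fun fin :: "('a list \<Rightarrow> 'a list \<Rightarrow> 'a \<Rightarrow> 'a list) \<Rightarrow> 'a list \<Rightarrow> 'a list \<Rightarrow> 'a list \<Rightarrow> 'a list" where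
  "fin f hs xs [] = xs"
| "fin f hs xs (x # \<sigma>) = fin f (hs @ [x]) (f hs xs x) \<sigma>"

fun run2 :: "('a list \<Rightarrow> 'a list \<Rightarrow> 'a \<Rightarrow> 'a list) \<Rightarrow> 'a list \<Rightarrow> 'a list \<Rightarrow> 'a list \<Rightarrow> nat \<times> 'a list" where
  "run2 f hs xs [] = (0, xs)"
| "run2 f hs xs (x # \<sigma>) = (let r = run2 f (hs @ [x]) (f hs xs x) \<sigma> in (pos xs x + 1 + fst r, snd r))"

lemma run2_eq: "run2 f hs xs \<sigma> = (run_cost f hs xs \<sigma>, fin f hs xs \<sigma>)"
  by (induction \<sigma> arbitrary: hs xs) (auto simp: Let_def)

lemma run_cost_rel:
  assumes "hdep f ob S" "compat ob"
  shows "relg ob S a b \<Longrightarrow> set \<sigma> \<subseteq> S \<Longrightarrow> run_cost f a xs \<sigma> = run_cost f b xs \<sigma> \<and> fin f a xs \<sigma> = fin f b xs \<sigma>"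
proof (induction \<sigma> arbitrary: a b xs)
  case Nil then show ?case by simp
next
  case (Cons x \<sigma>)
  have e: "f a xs x = f b xs x" using assms Cons.prems unfolding hdep_def by auto
  have "relg ob S (a @ [x]) (b @ [x])" using relg_app[OF assms(2) Cons.prems(1), of "[x]"] .
  then show ?case using Cons.IH[of "a @ [x]" "b @ [x]" "f b xs x"] Cons.prems e by simp
qed

lemma run_cost_append:
  "run_cost f hs xs (\<sigma>1 @ \<sigma>2) = run_cost f hs xs \<sigma>1 + run_cost f (hs @ \<sigma>1) (fin f hs xs \<sigma>1) \<sigma>2"
  by (induction \<sigma>1 arbitrary: hs xs) auto

fun chk :: "('a list \<Rightarrow> 'a list \<Rightarrow> 'a \<Rightarrow> 'a list) \<Rightarrow> ('a list \<Rightarrow> 'a \<Rightarrow> 'b) \<Rightarrow> 'a list \<Rightarrow> 'a list \<Rightarrow> 'a list \<Rightarrow> ('a list \<times> 'a list \<times> nat \<times> 'a list) list \<Rightarrow> bool" where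
  "chk f ob S H L [] = True"
| "chk f ob S H L ((P, H', c, L') # cs) = (list_all (\<lambda>x. x \<in> set S) P \<and> run2 f H L P = (c, L') \<and>
      list_all (\<lambda>x. ob (H @ P) x = ob H' x) S \<and> chk f ob S H' L' cs)"

fun finL :: "'a list \<Rightarrow> ('a list \<times> 'a list \<times> nat \<times> 'a list) list \<Rightarrow> 'a list" where
  "finL L [] = L"
| "finL L ((P, H', c, L') # cs) = finL L' cs"

fun finH :: "'a list \<Rightarrow> ('a list \<times> 'a list \<times> nat \<times> 'a list) list \<Rightarrow> 'a list" where
  "finH H [] = H"
| "finH H ((P, H', c, L') # cs) = finH H' cs"

lemma chain:
  assumes "hdep f ob (set S)" "compat ob"
  shows "chk f ob S H L cs \<Longrightarrow> relg ob (set S) hs H \<Longrightarrow>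
    run_cost f hs L (concat (map fst cs) @ rest) = sum_list (map (fst \<circ> snd \<circ> snd) cs) +
       run_cost f (hs @ concat (map fst cs)) (finL L cs) rest
    \<and> relg ob (set S) (hs @ concat (map fst cs)) (finH H cs)"
proof (induction cs arbitrary: hs H L)
  case Nil then show ?case by simp
next
  case (Cons p cs)
  obtain P H' c L' where p: "p = (P, H', c, L')" by (cases p) auto
  from Cons.prems p have sP: "set P \<subseteq> set S" and rc: "run_cost f H L P = c"
    and rf: "fin f H L P = L'"
    and rl: "relg ob (set S) (H @ P) H'" and ch: "chk f ob S H' L' cs"
    by (auto simp: list_all_iff relg_def run2_eq)
  have eq: "run_cost f hs L P = run_cost f H L P \<and> fin f hs L P = fin f H L P"
    using run_cost_rel[OF assms Cons.prems(2) sP] .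
  have r2: "relg ob (set S) (hs @ P) H'" using relg_trans[OF relg_app[OF assms(2) Cons.prems(2)] rl] .
  note IH = Cons.IH[OF ch r2]
  have "run_cost f hs L (concat (map fst (p # cs)) @ rest) =
        run_cost f hs L (P @ (concat (map fst cs) @ rest))" by (simp add: p)
  also have "\<dots> = c + run_cost f (hs @ P) L' (concat (map fst cs) @ rest)"
    using eq rc rf by (simp add: run_cost_append)
  finally show ?case using IH by (simp add: p algebra_simps)
qed

lemma periodic:
  assumes "hdep f ob (set S)" "compat ob" "chk f ob S H0 L0 cs" "finL L0 cs = L0" "finH H0 cs = H0"
    "concat (map fst cs) = D" "sum_list (map (fst \<circ> snd \<circ> snd) cs) = C"
  shows "relg ob (set S) hs H0 \<Longrightarrow> run_cost f hs L0 (concat (replicate k D)) = k * C"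
proof (induction k arbitrary: hs)
  case 0 then show ?case by simp
next
  case (Suc k)
  note ch = chain[OF assms(1,2,3) Suc.prems, of "concat (replicate k D)"]
  then show ?case using Suc.IH[of "hs @ D"] assms(4-7) by simp
qed


definition pass :: "bool \<Rightarrow> nat \<Rightarrow> nat list" where
 "pass d m = concat (map (\<lambda>x. replicate m x) (if d then [0..<28] else rev [0..<28]))"

definition cs_ts1 :: "(nat list \<times> nat list \<times> nat \<times> nat list) list" where "cs_ts1 = [(pass True 1, pass True 1, 406, [0..<28]),
   (pass True 2, pass True 2, 812, rev [0..<28]),
   (pass True 2, pass True 2, 1568, rev [0..<28]),
   (pass False 1, pass False 1, 406, rev [0..<28]),
   (pass False 3, pass False 3, 840, [0..<28]),
   (pass True 1, pass True 1, 406, [0..<28]),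
   (pass True 2, pass True 2, 812, rev [0..<28]),
   (pass True 2, pass True 2, 1568, rev [0..<28]),
   (pass False 1, pass False 1, 406, rev [0..<28]),
   (pass False 3, pass False 3, 840, [0..<28])]"

definition cs_ts :: "(nat list \<times> nat list \<times> nat \<times> nat list) list" where "cs_ts = [(pass True 1, pass True 1, 406, [0..<28]),
   (pass True 2, pass True 2, 812, rev [0..<28]),
   (pass True 2, pass True 2, 1568, rev [0..<28]),
   (pass False 1, pass False 1, 406, rev [0..<28]),
   (pass False 3, pass False 3, 840, [0..<28]),
   (pass True 1, pass True 1, 406, [0..<28]),
   (pass True 2, pass True 2, 812, rev [0..<28]),
   (pass True 2, pass True 2, 1568, rev [0..<28]),
   (pass False 1, pass False 1, 406, rev [0..<28]),
   (pass False 3, pass False 3, 840, [0..<28])]"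

definition cs_mtfo :: "(nat list \<times> nat list \<times> nat \<times> nat list) list" where "cs_mtfo = [(pass True 1, [0..<28], 406, rev [0..<28]),
   (pass True 2, [0..<28], 1568, rev [0..<28]),
   (pass True 2, [0..<28], 1568, rev [0..<28]),
   (pass False 1, [], 406, rev [0..<28]),
   (pass False 3, [0..<28], 462, [0..<28]),
   (pass True 1, [], 406, [0..<28]),
   (pass True 2, [], 434, rev [0..<28]),
   (pass True 2, [], 812, rev [0..<28]),
   (pass False 1, [0..<28], 406, [0..<28]),
   (pass False 3, [], 1596, [0..<28])]"

definition cs_mtfe :: "(nat list \<times> nat list \<times> nat \<times> nat list) list" where "cs_mtfe = [(pass True 1, [0..<28], 406, [0..<28]),
   (pass True 2, [0..<28], 434, rev [0..<28]),
   (pass True 2, [0..<28], 812, rev [0..<28]),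
   (pass False 1, [], 406, [0..<28]),
   (pass False 3, [0..<28], 1596, [0..<28]),
   (pass True 1, [], 406, rev [0..<28]),
   (pass True 2, [], 1568, rev [0..<28]),
   (pass True 2, [], 1568, rev [0..<28]),
   (pass False 1, [0..<28], 406, rev [0..<28]),
   (pass False 3, [], 462, [0..<28])]"

lemma c1: "run2 ts_step ([]) ([0..<28]) (pass True 1) = (406, [0..<28])" by code_simp

lemma c2: "run2 ts_step (pass True 1) ([0..<28]) (pass True 2) = (812, rev [0..<28])" by code_simp

lemma c3: "run2 ts_step (pass True 2) (rev [0..<28]) (pass True 2) = (1568, rev [0..<28])" by code_simp

lemma c4: "run2 ts_step (pass True 2) (rev [0..<28]) (pass False 1) = (406, rev [0..<28])" by code_simp

lemma c5: "run2 ts_step (pass False 1) (rev [0..<28]) (pass False 3) = (840, [0..<28])" by code_simp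

lemma c6: "run2 ts_step (pass False 3) ([0..<28]) (pass True 1) = (406, [0..<28])" by code_simp

lemma c7: "run2 mtfo_step ([]) ([0..<28]) (pass True 1) = (406, rev [0..<28])" by code_simp

lemma c8: "run2 mtfo_step ([0..<28]) (rev [0..<28]) (pass True 2) = (1568, rev [0..<28])" by code_simp

lemma c9: "run2 mtfo_step ([0..<28]) (rev [0..<28]) (pass False 1) = (406, rev [0..<28])" by code_simp

lemma c10: "run2 mtfo_step ([]) (rev [0..<28]) (pass False 3) = (462, [0..<28])" by code_simp

lemma c11: "run2 mtfo_step ([0..<28]) ([0..<28]) (pass True 1) = (406, [0..<28])" by code_simp

lemma c12: "run2 mtfo_step ([]) ([0..<28]) (pass True 2) = (434, rev [0..<28])" by code_simp

lemma c13: "run2 mtfo_step ([]) (rev [0..<28]) (pass True 2) = (812, rev [0..<28])" by code_simp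

lemma c14: "run2 mtfo_step ([]) (rev [0..<28]) (pass False 1) = (406, [0..<28])" by code_simp

lemma c15: "run2 mtfo_step ([0..<28]) ([0..<28]) (pass False 3) = (1596, [0..<28])" by code_simp

lemma c16: "run2 mtfe_step ([]) ([0..<28]) (pass True 1) = (406, [0..<28])" by code_simp

lemma c17: "run2 mtfe_step ([0..<28]) ([0..<28]) (pass True 2) = (434, rev [0..<28])" by code_simp

lemma c18: "run2 mtfe_step ([0..<28]) (rev [0..<28]) (pass True 2) = (812, rev [0..<28])" by code_simp

lemma c19: "run2 mtfe_step ([0..<28]) (rev [0..<28]) (pass False 1) = (406, [0..<28])" by code_simp

lemma c20: "run2 mtfe_step ([]) ([0..<28]) (pass False 3) = (1596, [0..<28])" by code_simp

lemma c21: "run2 mtfe_step ([0..<28]) ([0..<28]) (pass True 1) = (406, rev [0..<28])" by code_simp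

lemma c22: "run2 mtfe_step ([]) (rev [0..<28]) (pass True 2) = (1568, rev [0..<28])" by code_simp

lemma c23: "run2 mtfe_step ([]) (rev [0..<28]) (pass False 1) = (406, rev [0..<28])" by code_simp

lemma c24: "run2 mtfe_step ([0..<28]) (rev [0..<28]) (pass False 3) = (462, [0..<28])" by code_simp

lemma c25: "list_all (\<lambda>x. obT ([] @ pass True 1) x = obT (pass True 1) x) [0..<28]" by code_simp

lemma c26: "list_all (\<lambda>x. obT (pass True 1 @ pass True 2) x = obT (pass True 2) x) [0..<28]" by code_simp

lemma c27: "list_all (\<lambda>x. obT (pass True 2 @ pass True 2) x = obT (pass True 2) x) [0..<28]" by code_simp

lemma c28: "list_all (\<lambda>x. obT (pass True 2 @ pass False 1) x = obT (pass False 1) x) [0..<28]" by code_simp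

lemma c29: "list_all (\<lambda>x. obT (pass False 1 @ pass False 3) x = obT (pass False 3) x) [0..<28]" by code_simp

lemma c30: "list_all (\<lambda>x. obT (pass False 3 @ pass True 1) x = obT (pass True 1) x) [0..<28]" by code_simp

lemma c31: "list_all (\<lambda>x. obP ([] @ pass True 1) x = obP ([0..<28]) x) [0..<28]" by code_simp

lemma c32: "list_all (\<lambda>x. obP ([0..<28] @ pass True 2) x = obP ([0..<28]) x) [0..<28]" by code_simp

lemma c33: "list_all (\<lambda>x. obP ([0..<28] @ pass False 1) x = obP ([]) x) [0..<28]" by code_simp

lemma c34: "list_all (\<lambda>x. obP ([] @ pass False 3) x = obP ([0..<28]) x) [0..<28]" by code_simp

lemma c35: "list_all (\<lambda>x. obP ([0..<28] @ pass True 1) x = obP ([]) x) [0..<28]" by code_simp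

lemma c36: "list_all (\<lambda>x. obP ([] @ pass True 2) x = obP ([]) x) [0..<28]" by code_simp

lemma c37: "list_all (\<lambda>x. obP ([] @ pass False 1) x = obP ([0..<28]) x) [0..<28]" by code_simp

lemma c38: "list_all (\<lambda>x. obP ([0..<28] @ pass False 3) x = obP ([]) x) [0..<28]" by code_simp

lemma c39: "list_all (\<lambda>x. x \<in> set [0..<28]) (pass False 1)" by code_simp

lemma c40: "list_all (\<lambda>x. x \<in> set [0..<28]) (pass True 1)" by code_simp

lemma c41: "list_all (\<lambda>x. x \<in> set [0..<28]) (pass False 3)" by code_simp

lemma c42: "list_all (\<lambda>x. x \<in> set [0..<28]) (pass True 2)" by code_simp

lemmas chunks = c1 c2 c3 c4 c5 c6 c7 c8 c9 c10 c11 c12 c13 c14 c15 c16 c17 c18 c19 c20 c21 c22 c23 c24 c25 c26 c27 c28 c29 c30 c31 c32 c33 c34 c35 c36 c37 c38 c39 c40 c41 c42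

lemma chk_ts1: "chk ts_step obT [0..<28] [] [0..<28] cs_ts1"
  unfolding cs_ts1_def by (simp only: chk.simps chunks simp_thms)
lemma chk_ts: "chk ts_step obT [0..<28] (pass False 3) [0..<28] cs_ts"
  unfolding cs_ts_def by (simp only: chk.simps chunks simp_thms)
lemma chk_mtfo: "chk mtfo_step obP [0..<28] [] [0..<28] cs_mtfo"
  unfolding cs_mtfo_def by (simp only: chk.simps chunks simp_thms)
lemma chk_mtfe: "chk mtfe_step obP [0..<28] [] [0..<28] cs_mtfe"
  unfolding cs_mtfe_def by (simp only: chk.simps chunks simp_thms)


fun ofr :: "bool \<Rightarrow> 'a list \<Rightarrow> 'a list \<Rightarrow> nat \<times> 'a list" where
  "ofr b xs [] = (0, xs)"
| "ofr b xs (x # \<sigma>) = (let r = ofr b (move_to (if b then 0 else pos xs x) x xs) \<sigma> in (pos xs x + 1 + fst r, snd r))"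

lemma ofr_off: "off_cost (snd (ofr b xs \<sigma>1)) \<sigma>2 c \<Longrightarrow> off_cost xs (\<sigma>1 @ \<sigma>2) (fst (ofr b xs \<sigma>1) + c)"
proof (induction \<sigma>1 arbitrary: xs)
  case Nil then show ?case by simp
next
  case (Cons x \<sigma>1)
  let ?j = "if b then 0 else pos xs x"
  have "off_cost (move_to ?j x xs) (\<sigma>1 @ \<sigma>2) (fst (ofr b (move_to ?j x xs) \<sigma>1) + c)"
    using Cons by (simp add: Let_def)
  then have "off_cost xs (x # \<sigma>1 @ \<sigma>2) (0 + (pos xs x + 1) + (fst (ofr b (move_to ?j x xs) \<sigma>1) + c))"
    by (intro off_cons[where ys=xs and n=0 and j="?j"]) (simp_all add: swaps_refl)
  then show ?case by (simp add: Let_def add.assoc)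
qed

fun ochk :: "'a list \<Rightarrow> ('a list \<times> bool \<times> nat \<times> 'a list) list \<Rightarrow> bool" where
  "ochk L [] = True"
| "ochk L ((P, b, c, L') # cs) = (ofr b L P = (c, L') \<and> ochk L' cs)"

fun ofinL :: "'a list \<Rightarrow> ('a list \<times> bool \<times> nat \<times> 'a list) list \<Rightarrow> 'a list" where
  "ofinL L [] = L"
| "ofinL L ((P, b, c, L') # cs) = ofinL L' cs"

lemma ochain: "ochk L cs \<Longrightarrow> off_cost (ofinL L cs) rest c \<Longrightarrow>
   off_cost L (concat (map fst cs) @ rest) (sum_list (map (fst \<circ> snd \<circ> snd) cs) + c)"
proof (induction cs arbitrary: L)
  case Nil then show ?case by simp
next
  case (Cons p cs)
  obtain P b c' L' where p: "p = (P, b, c', L')" by (cases p) auto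
  from Cons.prems p have o: "ofr b L P = (c', L')" and ch: "ochk L' cs" by auto
  have "off_cost L' (concat (map fst cs) @ rest) (sum_list (map (fst \<circ> snd \<circ> snd) cs) + c)"
    by (rule Cons.IH[OF ch]) (use Cons.prems p in simp)
  then have "off_cost (snd (ofr b L P)) (concat (map fst cs) @ rest) (sum_list (map (fst \<circ> snd \<circ> snd) cs) + c)"
    using o by simp
  from ofr_off[OF this] show ?case using o p by (simp add: add.assoc comp_def)
qed

definition DD :: "nat list" where
 "DD = pass True 1 @ pass True 2 @ pass True 2 @ pass False 1 @ pass False 3 @
       pass True 1 @ pass True 2 @ pass True 2 @ pass False 1 @ pass False 3"

definition ocs :: "(nat list \<times> bool \<times> nat \<times> nat list) list" where "ocs = [(pass True 1, False, 406, [0..<28]),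
   (pass True 2, False, 812, [0..<28]),
   (pass True 2, True, 434, rev [0..<28]),
   (pass False 1, False, 406, rev [0..<28]),
   (pass False 3, True, 462, [0..<28]),
   (pass True 1, False, 406, [0..<28]),
   (pass True 2, False, 812, [0..<28]),
   (pass True 2, True, 434, rev [0..<28]),
   (pass False 1, False, 406, rev [0..<28]),
   (pass False 3, True, 462, [0..<28::nat])]"

lemma o1: "ofr False [0..<28] (pass True 1) = (406, [0..<28::nat])" by code_simp
lemma o2: "ofr False [0..<28] (pass True 2) = (812, [0..<28::nat])" by code_simp
lemma o3: "ofr True [0..<28] (pass True 2) = (434, rev [0..<28::nat])" by code_simp
lemma o4: "ofr False (rev [0..<28]) (pass False 1) = (406, rev [0..<28::nat])" by code_simp
lemma o5: "ofr True (rev [0..<28]) (pass False 3) = (462, [0..<28::nat])" by code_simp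

lemma ochk_ocs: "ochk [0..<28] ocs"
  unfolding ocs_def by (simp only: ochk.simps o1 o2 o3 o4 o5 simp_thms)

lemma off_rep: "off_cost [0..<28] (concat (replicate k DD)) (k * 5040)"
proof (induction k)
  case 0 then show ?case by (simp add: off_nil)
next
  case (Suc k)
  have "ofinL [0..<28] ocs = [0..<28]" "concat (map fst ocs) = DD"
    "sum_list (map (fst \<circ> snd \<circ> snd) ocs) = (5040::nat)"
    by (simp_all add: ocs_def DD_def)
  with ochain[OF ochk_ocs, of "concat (replicate k DD)" "k * 5040"] Suc show ?case by simp
qed

lemma OPT_le: "OPT [0..<28] (concat (replicate k DD)) \<le> k * 5040"
  unfolding OPT_def by (rule Least_le) (rule off_rep)

lemma setDD: "list_all (\<lambda>x. x \<in> set [0..<28::nat]) DD" by code_simp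

lemma facts:
  "concat (map fst cs_ts1) = DD" "concat (map fst cs_ts) = DD"
  "concat (map fst cs_mtfo) = DD" "concat (map fst cs_mtfe) = DD"
  "sum_list (map (fst \<circ> snd \<circ> snd) cs_ts1) = 8064" "sum_list (map (fst \<circ> snd \<circ> snd) cs_ts) = 8064"
  "sum_list (map (fst \<circ> snd \<circ> snd) cs_mtfo) = 8064" "sum_list (map (fst \<circ> snd \<circ> snd) cs_mtfe) = 8064"
  "finL [0..<28] cs_ts1 = [0..<28]" "finL [0..<28] cs_ts = [0..<28]"
  "finL [0..<28] cs_mtfo = [0..<28]" "finL [0..<28] cs_mtfe = [0..<28]"
  "finH [] cs_ts1 = pass False 3" "finH (pass False 3) cs_ts = pass False 3"
  "finH [] cs_mtfo = []" "finH [] cs_mtfe = []"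
  by (simp_all add: cs_ts1_def cs_ts_def cs_mtfo_def cs_mtfe_def DD_def)

lemma relg_refl: "relg ob S a a" by (simp add: relg_def)

lemma TS_val: "TS [0..<28] (concat (replicate (Suc k) DD)) = Suc k * 8064"
proof -
  have h: "hdep ts_step obT (set [0..<28::nat])" by (rule hdep_ts)
  note c1 = chain[OF h compat_T chk_ts1 relg_refl, of "concat (replicate k DD)"]
  have "run_cost ts_step DD [0..<28] (concat (replicate k DD)) = k * 8064"
    by (rule periodic[OF h compat_T chk_ts facts(10) facts(14) facts(2) facts(6)])
       (use c1 facts in simp)
  then show ?thesis using c1 facts unfolding TS_def by simp
qed

lemma MTFO_val: "MTFO [0..<28] (concat (replicate k DD)) = k * 8064"
  unfolding MTFO_def
  by (rule periodic[OF hdep_mtfo compat_P chk_mtfo facts(11) facts(15) facts(3) facts(7)])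
     (rule relg_refl)

lemma MTFE_val: "MTFE [0..<28] (concat (replicate k DD)) = k * 8064"
  unfolding MTFE_def
  by (rule periodic[OF hdep_mtfe compat_P chk_mtfe facts(12) facts(16) facts(4) facts(8)])
     (rule relg_refl)


theorem theorem5:
  fixes c b :: real
  assumes "c < 1.6"
  shows "\<exists>(xs :: nat list) \<sigma>. distinct xs \<and> set \<sigma> \<subseteq> set xs \<and>
           real (min (TS xs \<sigma>) (min (MTFO xs \<sigma>) (MTFE xs \<sigma>))) > c * real (OPT xs \<sigma>) + b"
proof -
  define c' where "c' = max c 0"
  define \<delta> where "\<delta> = 8064 - 5040 * c'"
  have c'0: "c' \<ge> 0" "c \<le> c'" by (auto simp: c'_def)
  have dpos: "\<delta> > 0" using assms by (auto simp: \<delta>_def c'_def)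
  define k where "k = nat \<lceil>b / \<delta>\<rceil>"
  define K where "K = Suc k"
  have "real k \<ge> b / \<delta>" unfolding k_def by linarith
  then have Kb: "real K * \<delta> > b" using dpos unfolding K_def
    by (simp add: pos_divide_le_eq algebra_simps)
  define \<sigma> where "\<sigma> = concat (replicate K DD)"
  have mn: "min (TS [0..<28] \<sigma>) (min (MTFO [0..<28] \<sigma>) (MTFE [0..<28] \<sigma>)) = K * 8064"
    unfolding \<sigma>_def K_def using TS_val[of k] MTFO_val[of "Suc k"] MTFE_val[of "Suc k"] by simp
  have op: "real (OPT [0..<28] \<sigma>) \<le> real K * 5040"
    using OPT_le[of K] unfolding \<sigma>_def by simp
  have "c * real (OPT [0..<28] \<sigma>) \<le> c' * real (OPT [0..<28] \<sigma>)"
    using c'0 by (simp add: mult_right_mono)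
  also have "\<dots> \<le> c' * (real K * 5040)" using op c'0 by (simp add: mult_left_mono)
  finally have "c * real (OPT [0..<28] \<sigma>) + b < real K * 8064"
    using Kb by (simp add: \<delta>_def algebra_simps)
  moreover have "set \<sigma> \<subseteq> set [0..<28]"
    using setDD unfolding \<sigma>_def by (auto simp: list_all_iff)
  ultimately show ?thesis using mn
    by (intro exI[of _ "[0..<28]"] exI[of _ \<sigma>]) simp
qed

end
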